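(* Let $i\in\{1,2\}$ and let $X$ be a digital image. Then $X$ is $\mathrm{NP}_i$-irreducible if and only if no automorphism of $X$ is $\mathrm{NP}_i$-homotopic to a non-surjective map $X\to X$.
   Context: A digital image is a finite set $X\subset\mathbb{Z}^n$ with a reflexive symmetric adjacency relation (a finite reflexive graph); continuous maps send adjacent points to adjacent points; an automorphism is a continuous bijection $X\to X$ with continuous inverse. On products, $\mathrm{NP}_u$ declares two tuples adjacent iff coordinates are adjacent in at most $u$ positions and equal elsewhere. An $\mathrm{NP}_i$-homotopy from $f$ to $g:X\to Y$ is an $\mathrm{NP}_i$-continuous $H:X\times[0,m]_{\mathbb{Z}}\to Y$ (interval with $a\sim b\iff|a-b|\le1$) with $H(\cdot,0)=f$, $H(\cdot,m)=g$; write $f\simeq_i g$. $X,Y$ are $\mathrm{NP}_i$-homotopy equivalent if there are continuous $f:X\to Y$, $g:Y\to X$ with $g\circ f\simeq_i\mathrm{id}_X$, $f\circ g\simeq_i\mathrm{id}_Y$. $X$ is $\mathrm{NP}_i$-irreducible if it is not $\mathrm{NP}_i$-homotopy equivalent to a digital image with fewer points. *)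

theory Defs
  imports Main
begin

definition digital_image :: "int list set \<Rightarrow> (int list \<Rightarrow> int list \<Rightarrow> bool) \<Rightarrow> bool" where
  "digital_image X adj \<longleftrightarrow> finite X \<and> (\<exists>n. \<forall>x\<in>X. length x = n)
     \<and> (\<forall>x\<in>X. adj x x) \<and> (\<forall>x\<in>X. \<forall>y\<in>X. adj x y \<longrightarrow> adj y x)"

definition dcont :: "'a set \<Rightarrow> ('a \<Rightarrow> 'a \<Rightarrow> bool) \<Rightarrow> 'b set \<Rightarrow> ('b \<Rightarrow> 'b \<Rightarrow> bool) \<Rightarrow> ('a \<Rightarrow> 'b) \<Rightarrow> bool" where
  "dcont X A Y B f \<longleftrightarrow> f ` X \<subseteq> Y \<and> (\<forall>x\<in>X. \<forall>y\<in>X. A x y \<longrightarrow> B (f x) (f y))"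

definition int_adj :: "int \<Rightarrow> int \<Rightarrow> bool" where
  "int_adj a b \<longleftrightarrow> \<bar>a - b\<bar> \<le> 1"

definition np_adj :: "nat \<Rightarrow> ('a \<Rightarrow> 'a \<Rightarrow> bool) \<Rightarrow> ('b \<Rightarrow> 'b \<Rightarrow> bool) \<Rightarrow> 'a \<times> 'b \<Rightarrow> 'a \<times> 'b \<Rightarrow> bool" where
  "np_adj u A B p q \<longleftrightarrow>
     (fst p = fst q \<or> A (fst p) (fst q)) \<and> (snd p = snd q \<or> B (snd p) (snd q)) \<and>
     (if fst p \<noteq> fst q then 1 else 0) + (if snd p \<noteq> snd q then 1 else 0) \<le> u"

definition np_homotopic :: "nat \<Rightarrow> 'a set \<Rightarrow> ('a \<Rightarrow> 'a \<Rightarrow> bool) \<Rightarrow> 'b set \<Rightarrow> ('b \<Rightarrow> 'b \<Rightarrow> bool)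
    \<Rightarrow> ('a \<Rightarrow> 'b) \<Rightarrow> ('a \<Rightarrow> 'b) \<Rightarrow> bool" where
  "np_homotopic u X A Y B f g \<longleftrightarrow> dcont X A Y B f \<and> dcont X A Y B g \<and>
     (\<exists>m::nat. \<exists>H :: 'a \<times> int \<Rightarrow> 'b.
        dcont (X \<times> {0..int m}) (np_adj u A int_adj) Y B H
        \<and> (\<forall>x\<in>X. H (x, 0) = f x) \<and> (\<forall>x\<in>X. H (x, int m) = g x))"

definition np_htpy_equiv :: "nat \<Rightarrow> 'a set \<Rightarrow> ('a \<Rightarrow> 'a \<Rightarrow> bool) \<Rightarrow> 'b set \<Rightarrow> ('b \<Rightarrow> 'b \<Rightarrow> bool) \<Rightarrow> bool" where
  "np_htpy_equiv u X A Y B \<longleftrightarrow> (\<exists>f g. dcont X A Y B f \<and> dcont Y B X A g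
     \<and> np_homotopic u X A X A (g \<circ> f) id \<and> np_homotopic u Y B Y B (f \<circ> g) id)"

definition np_irreducible :: "nat \<Rightarrow> int list set \<Rightarrow> (int list \<Rightarrow> int list \<Rightarrow> bool) \<Rightarrow> bool" where
  "np_irreducible u X A \<longleftrightarrow>
     \<not> (\<exists>Y B. digital_image Y B \<and> card Y < card X \<and> np_htpy_equiv u X A Y B)"

definition automorphism :: "'a set \<Rightarrow> ('a \<Rightarrow> 'a \<Rightarrow> bool) \<Rightarrow> ('a \<Rightarrow> 'a) \<Rightarrow> bool" where
  "automorphism X A f \<longleftrightarrow> bij_betw f X X \<and> dcont X A X A f \<and> dcont X A X A (inv_into X f)"

end

theory Submission
  imports Defs "HOL-Library.FuncSet"
begin

lemma np_adj_shift:
  assumes "np_adj u A int_adj (x,t) (y,s)" "(t'=s') = (t=s)" "\<bar>t'-s'\<bar> \<le> 1"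
  shows "np_adj u A int_adj (x,t') (y,s')"
  using assms unfolding np_adj_def int_adj_def by auto

lemma np_adj_int: "np_adj u A int_adj (x,t) (y,s) \<Longrightarrow> \<bar>t-s\<bar> \<le> 1"
  unfolding np_adj_def int_adj_def by (auto split: if_splits)

lemma dcont_comp: "dcont X A Y B f \<Longrightarrow> dcont Y B Z C g \<Longrightarrow> dcont X A Z C (g \<circ> f)"
  unfolding dcont_def image_subset_iff comp_def by blast

lemma htpy_refl:
  assumes "dcont X A Y B f" "\<forall>x\<in>X. A x x"
  shows "np_homotopic u X A Y B f f"
  unfolding np_homotopic_def
proof (intro conjI assms exI[of _ 0])
  show "\<exists>H. dcont (X \<times> {0..int 0}) (np_adj u A int_adj) Y B H \<and>
        (\<forall>x\<in>X. H (x, 0) = f x) \<and> (\<forall>x\<in>X. H (x, int 0) = f x)"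
    apply (rule exI[of _ "\<lambda>p. f (fst p)"])
    using assms unfolding dcont_def np_adj_def by auto
qed

lemma htpy_sym:
  assumes "np_homotopic u X A Y B f g"
  shows "np_homotopic u X A Y B g f"
proof -
  from assms obtain m H where f: "dcont X A Y B f" "dcont X A Y B g"
    and H: "dcont (X \<times> {0..int m}) (np_adj u A int_adj) Y B H"
    "\<forall>x\<in>X. H (x, 0) = f x" "\<forall>x\<in>X. H (x, int m) = g x"
    unfolding np_homotopic_def by blast
  define H' where "H' = (\<lambda>(x,t). H (x, int m - t))"
  have "dcont (X \<times> {0..int m}) (np_adj u A int_adj) Y B H'"
    unfolding dcont_def
  proof (intro conjI ballI impI)
    show "H' ` (X \<times> {0..int m}) \<subseteq> Y" using H(1) unfolding dcont_def H'_def by force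
  next
    fix p q assume p: "p \<in> X \<times> {0..int m}" and q: "q \<in> X \<times> {0..int m}"
      and a: "np_adj u A int_adj p q"
    obtain x t y s where pq: "p = (x,t)" "q = (y,s)" by (cases p, cases q)
    have "np_adj u A int_adj (x, int m - t) (y, int m - s)"
      apply (rule np_adj_shift[of _ _ _ t _ s])
      using a np_adj_int[of u A x t y s] pq by auto
    then show "B (H' p) (H' q)" using H(1) p q pq unfolding dcont_def H'_def by auto
  qed
  then show ?thesis unfolding np_homotopic_def using f H
    by (intro conjI f exI[of _ m] exI[of _ H']) (auto simp: H'_def)
qed

lemma htpy_trans:
  assumes "np_homotopic u X A Y B f g" "np_homotopic u X A Y B g h"
  shows "np_homotopic u X A Y B f h"
proof -
  from assms(1) obtain m1 H1 where f: "dcont X A Y B f" "dcont X A Y B g"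
    and H1: "dcont (X \<times> {0..int m1}) (np_adj u A int_adj) Y B H1"
    "\<forall>x\<in>X. H1 (x, 0) = f x" "\<forall>x\<in>X. H1 (x, int m1) = g x"
    unfolding np_homotopic_def by blast
  from assms(2) obtain m2 H2 where h: "dcont X A Y B h"
    and H2: "dcont (X \<times> {0..int m2}) (np_adj u A int_adj) Y B H2"
    "\<forall>x\<in>X. H2 (x, 0) = g x" "\<forall>x\<in>X. H2 (x, int m2) = h x"
    unfolding np_homotopic_def by blast
  define H where "H = (\<lambda>(x,t). if t \<le> int m1 then H1 (x,t) else H2 (x, t - int m1))"
  have "dcont (X \<times> {0..int (m1+m2)}) (np_adj u A int_adj) Y B H"
    unfolding dcont_def
  proof (intro conjI ballI impI)
    show "H ` (X \<times> {0..int (m1+m2)}) \<subseteq> Y"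
      using H1(1) H2(1) unfolding dcont_def H_def by (force split: if_splits)
  next
    fix p q assume p: "p \<in> X \<times> {0..int (m1+m2)}" and q: "q \<in> X \<times> {0..int (m1+m2)}"
      and a: "np_adj u A int_adj p q"
    obtain x t y s where pq: "p = (x,t)" "q = (y,s)" by (cases p, cases q)
    have ts: "\<bar>t-s\<bar> \<le> 1" using np_adj_int a pq by metis
    consider "t \<le> int m1" "s \<le> int m1" | "t > int m1" "s > int m1"
      | "t = int m1" "s = int m1 + 1" | "s = int m1" "t = int m1 + 1"
      using ts by linarith
    then show "B (H p) (H q)"
    proof cases
      case 1 then show ?thesis using H1(1) p q pq a unfolding dcont_def H_def by auto
    next
      case 2
      have "np_adj u A int_adj (x, t - int m1) (y, s - int m1)"
        apply (rule np_adj_shift[of _ _ _ t _ s]) using a pq ts by auto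
      then show ?thesis using 2 H2(1) p q pq unfolding dcont_def H_def by auto
    next
      case 3
      have "np_adj u A int_adj (x, 0) (y, 1)"
        apply (rule np_adj_shift[of _ _ _ t _ s]) using a pq ts 3 by auto
      moreover have "H p = H2 (x,0)" using 3 pq p H1(2) H1(3) H2(2) by (auto simp: H_def)
      ultimately show ?thesis using 3 H2(1) p q pq unfolding dcont_def H_def by auto
    next
      case 4
      have "np_adj u A int_adj (x, 1) (y, 0)"
        apply (rule np_adj_shift[of _ _ _ t _ s]) using a pq ts 4 by auto
      moreover have "H q = H2 (y,0)" using 4 pq q H1(3) H2(2) by (auto simp: H_def)
      ultimately show ?thesis using 4 H2(1) p q pq unfolding dcont_def H_def by auto
    qed
  qed
  then show ?thesis unfolding np_homotopic_def using f h H1 H2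
    by (intro conjI f h exI[of _ "m1+m2"] exI[of _ H]) (auto simp: H_def)
qed

lemma htpy_pre:
  assumes "np_homotopic u X A Y B f g" "dcont W C X A b"
  shows "np_homotopic u W C Y B (f \<circ> b) (g \<circ> b)"
proof -
  from assms(1) obtain m H where f: "dcont X A Y B f" "dcont X A Y B g"
    and H: "dcont (X \<times> {0..int m}) (np_adj u A int_adj) Y B H"
    "\<forall>x\<in>X. H (x, 0) = f x" "\<forall>x\<in>X. H (x, int m) = g x"
    unfolding np_homotopic_def by blast
  define H' where "H' = (\<lambda>(w,t). H (b w, t))"
  have "dcont (W \<times> {0..int m}) (np_adj u C int_adj) Y B H'"
    unfolding dcont_def
  proof (intro conjI ballI impI)
    show "H' ` (W \<times> {0..int m}) \<subseteq> Y" using H(1) assms(2) unfolding dcont_def H'_def by force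
  next
    fix p q assume p: "p \<in> W \<times> {0..int m}" and q: "q \<in> W \<times> {0..int m}"
      and a: "np_adj u C int_adj p q"
    obtain x t y s where pq: "p = (x,t)" "q = (y,s)" by (cases p, cases q)
    have "np_adj u A int_adj (b x, t) (b y, s)"
      using a pq p q assms(2) unfolding np_adj_def dcont_def by (auto split: if_splits)
    then show "B (H' p) (H' q)" using H(1) assms(2) p q pq unfolding dcont_def H'_def image_subset_iff by auto
  qed
  then show ?thesis unfolding np_homotopic_def using f H assms(2)
    by (intro conjI dcont_comp[OF assms(2)] exI[of _ m] exI[of _ H']) (auto simp: H'_def dcont_def)
qed

lemma htpy_post:
  assumes "np_homotopic u X A Y B f g" "dcont Y B Z D c"
  shows "np_homotopic u X A Z D (c \<circ> f) (c \<circ> g)"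
proof -
  from assms(1) obtain m H where f: "dcont X A Y B f" "dcont X A Y B g"
    and H: "dcont (X \<times> {0..int m}) (np_adj u A int_adj) Y B H"
    "\<forall>x\<in>X. H (x, 0) = f x" "\<forall>x\<in>X. H (x, int m) = g x"
    unfolding np_homotopic_def by blast
  have "dcont (X \<times> {0..int m}) (np_adj u A int_adj) Z D (c \<circ> H)"
    by (rule dcont_comp[OF H(1) assms(2)])
  then show ?thesis unfolding np_homotopic_def using f H
    by (intro conjI dcont_comp[OF _ assms(2)] f exI[of _ m] exI[of _ "c \<circ> H"]) auto
qed


lemma dcont_id: "dcont X A X A id" unfolding dcont_def by auto

lemma dcont_funpow: "dcont X A X A h \<Longrightarrow> dcont X A X A (h ^^ j)"
  by (induction j) (auto simp: dcont_id intro: dcont_comp)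

lemma htpy_funpow:
  assumes "np_homotopic u X A X A id h" "\<forall>x\<in>X. A x x"
  shows "np_homotopic u X A X A id (h ^^ j)"
proof (induction j)
  case 0 show ?case unfolding funpow.simps(1) by (intro htpy_refl dcont_id assms(2))
next
  case (Suc j)
  have hc: "dcont X A X A h" using assms(1) unfolding np_homotopic_def by blast
  have "np_homotopic u X A X A (id \<circ> h ^^ j) (h \<circ> h ^^ j)"
    by (rule htpy_pre[OF assms(1) dcont_funpow[OF hc]])
  then have "np_homotopic u X A X A (h^^j) (h^^Suc j)"
    unfolding id_comp funpow.simps(2)[symmetric] .
  then show ?case by (rule htpy_trans[OF Suc])
qed

lemma idem_power:
  assumes "finite X" "h ` X \<subseteq> X"
  shows "\<exists>k\<ge>1. \<forall>x\<in>X. (h^^k) ((h^^k) x) = (h^^k) x"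
proof -
  define F where "F = (\<lambda>j. restrict (h^^j) X)"
  have maps0: "x \<in> X \<Longrightarrow> (h^^j) x \<in> X" for j x
    using assms(2) by (induction j) (auto simp: image_subset_iff)
  have maps: "(h^^j) ` X \<subseteq> X" for j using maps0 by blast
  have rF: "range F \<subseteq> X \<rightarrow>\<^sub>E X" unfolding F_def by (auto intro: maps0)
  have fin: "finite (X \<rightarrow>\<^sub>E X)" by (rule finite_PiE) (use assms(1) in auto)
  have "finite (range F)" by (rule finite_subset[OF rF fin])
  hence "\<not> inj F" using finite_imageD[of F UNIV] by auto
  then obtain a0 b0 where ab0: "a0 \<noteq> b0" "F a0 = F b0" unfolding inj_def by blast
  have pw: "\<forall>x\<in>X. (h^^a0) x = (h^^b0) x"
  proof
    fix x assume "x \<in> X"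
    then show "(h^^a0) x = (h^^b0) x" using fun_cong[OF ab0(2), of x] unfolding F_def by simp
  qed
  obtain a b where ab: "a < b" "\<forall>x\<in>X. (h^^a) x = (h^^b) x"
  proof (cases "a0 < b0")
    case True then show ?thesis using that pw by blast
  next
    case False then have "b0 < a0" using ab0 by simp
    then show ?thesis using that pw by auto
  qed
  define p where "p = b - a"
  have p1: "p \<ge> 1" using ab p_def by simp
  have step: "\<forall>x\<in>X. (h^^(j+p)) x = (h^^j) x" if "j \<ge> a" for j
  proof
    fix x assume x: "x \<in> X"
    have e1: "j+p = (j-a)+b" using that ab(1) p_def by simp
    have e2: "j = (j-a)+a" using that by simp
    have "(h^^(j+p)) x = (h^^(j-a)) ((h^^b) x)"
      by (simp only: e1 funpow_add comp_apply)
    also have "\<dots> = (h^^(j-a)) ((h^^a) x)" using ab(2) x by simp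
    also have "\<dots> = (h^^((j-a)+a)) x" by (simp only: funpow_add comp_apply)
    also have "\<dots> = (h^^j) x" using e2 by simp
    finally show "(h^^(j+p)) x = (h^^j) x" .
  qed
  have multi: "\<forall>x\<in>X. (h^^(j+q*p)) x = (h^^j) x" if "j \<ge> a" for j q
  proof (induction q)
    case 0 show ?case by simp
  next
    case (Suc q)
    have e: "j + Suc q * p = (j + q*p) + p" by simp
    show ?case unfolding e using step[of "j+q*p"] that Suc by auto
  qed
  define k where "k = (a+1)*p"
  have "(a+1)*1 \<le> (a+1)*p" by (rule mult_le_mono2[OF p1])
  hence k: "k \<ge> 1" "k \<ge> a" unfolding k_def by simp_all
  have "\<forall>x\<in>X. (h^^k) ((h^^k) x) = (h^^k) x"
  proof
    fix x assume x: "x \<in> X"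
    have "(h^^k) ((h^^k) x) = (h^^(k+k)) x" by (simp only: funpow_add comp_apply)
    also have "\<dots> = (h^^(k + (a+1)*p)) x" by (simp add: k_def)
    also have "\<dots> = (h^^k) x" using multi[OF k(2), of "a+1"] x by blast
    finally show "(h^^k) ((h^^k) x) = (h^^k) x" .
  qed
  then show ?thesis using k by blast
qed

lemma htpy_cong:
  assumes "np_homotopic u X A Y B f g" "\<forall>x\<in>X. f x = f' x" "\<forall>x\<in>X. g x = g' x"
  shows "np_homotopic u X A Y B f' g'"
proof -
  from assms(1) obtain m H where f: "dcont X A Y B f" "dcont X A Y B g"
    and H: "dcont (X \<times> {0..int m}) (np_adj u A int_adj) Y B H"
    "\<forall>x\<in>X. H (x, 0) = f x" "\<forall>x\<in>X. H (x, int m) = g x"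
    unfolding np_homotopic_def by blast
  have "dcont X A Y B f'" "dcont X A Y B g'" using f assms(2,3) unfolding dcont_def by auto
  then show ?thesis unfolding np_homotopic_def using H assms(2,3) by (intro conjI exI[of _ m] exI[of _ H]) auto
qed

theorem mainTheorem7:
  fixes X :: "int list set" and A :: "int list \<Rightarrow> int list \<Rightarrow> bool" and i :: nat
  assumes "i \<in> {1, 2}" and "digital_image X A"
  shows "np_irreducible i X A \<longleftrightarrow>
    \<not> (\<exists>f g. automorphism X A f \<and> g ` X \<subseteq> X \<and> g ` X \<noteq> X \<and> np_homotopic i X A X A f g)"
proof
  have finX: "finite X" and refl: "\<forall>x\<in>X. A x x" and symm: "\<forall>x\<in>X. \<forall>y\<in>X. A x y \<longrightarrow> A y x"
    and len: "\<exists>n. \<forall>x\<in>X. length x = n"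
    using assms(2) unfolding digital_image_def by auto
  assume irr: "np_irreducible i X A"
  show "\<not> (\<exists>f g. automorphism X A f \<and> g ` X \<subseteq> X \<and> g ` X \<noteq> X \<and> np_homotopic i X A X A f g)"
  proof
    assume "\<exists>f g. automorphism X A f \<and> g ` X \<subseteq> X \<and> g ` X \<noteq> X \<and> np_homotopic i X A X A f g"
    then obtain f g where f: "automorphism X A f" and g: "g ` X \<subseteq> X" "g ` X \<noteq> X"
      and fg: "np_homotopic i X A X A f g" by blast
    define fi where "fi = inv_into X f"
    have fic: "dcont X A X A fi" using f unfolding automorphism_def fi_def by blast
    have bij: "bij_betw f X X" using f unfolding automorphism_def by blast
    define h where "h = fi \<circ> g"
    have "np_homotopic i X A X A (fi \<circ> f) h" using htpy_post[OF fg fic] h_def by simp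
    moreover have "\<forall>x\<in>X. (fi \<circ> f) x = id x"
      using bij unfolding fi_def by (simp add: bij_betw_def inv_into_f_f)
    ultimately have idh: "np_homotopic i X A X A id h"
      using htpy_cong by blast
    have hc: "dcont X A X A h" using idh unfolding np_homotopic_def by blast
    have hX: "h ` X \<subseteq> X" using hc unfolding dcont_def by blast
    have cgX: "card (g ` X) < card X" using g finX by (simp add: psubset_card_mono psubset_eq)
    have chX: "card (h ` X) < card X"
      using cgX card_image_le[of "g ` X" fi] finX unfolding h_def image_comp[symmetric]
      by (meson finite_imageI le_less_trans)
    obtain k where k: "k \<ge> 1" "\<forall>x\<in>X. (h^^k) ((h^^k) x) = (h^^k) x"
      using idem_power[OF finX hX] by blast
    define r where "r = h^^k"
    define Y where "Y = r ` X"
    have rc: "dcont X A X A r" unfolding r_def by (rule dcont_funpow[OF hc])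
    have YX: "Y \<subseteq> X" using rc unfolding Y_def dcont_def by blast
    have "Y \<subseteq> h ` X"
    proof -
      obtain k' where "k = Suc k'" using k(1) by (cases k) auto
      then have "r = h \<circ> h^^k'" unfolding r_def by simp
      then show ?thesis unfolding Y_def using dcont_funpow[OF hc, of k'] unfolding dcont_def by auto
    qed
    hence cY: "card Y < card X" using chX finX
      by (meson card_mono finite_imageI le_less_trans)
    have dY: "digital_image Y A" using finX refl symm len YX
      unfolding digital_image_def by (meson finite_subset subset_iff)
    have ridem: "\<forall>y\<in>Y. r y = y" using k(2) unfolding Y_def r_def by auto
    have rXY: "dcont X A Y A r" using rc unfolding dcont_def Y_def by auto
    have iYX: "dcont Y A X A id" using YX unfolding dcont_def by auto
    have "np_homotopic i X A X A id r" using htpy_funpow[OF idh refl] r_def by simp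
    hence h1: "np_homotopic i X A X A (id \<circ> r) id" using htpy_sym by simp
    have rYY: "dcont Y A Y A (r \<circ> id)" using ridem unfolding dcont_def by auto
    have "np_homotopic i Y A Y A (r \<circ> id) (r \<circ> id)"
      by (rule htpy_refl[OF rYY]) (use refl YX in auto)
    hence h2: "np_homotopic i Y A Y A (r \<circ> id) id"
      by (rule htpy_cong) (use ridem in auto)
    have "np_htpy_equiv i X A Y A"
      unfolding np_htpy_equiv_def using rXY iYX h1 h2 by blast
    then show False using irr dY cY unfolding np_irreducible_def by blast
  qed
next
  have finX: "finite X" using assms(2) unfolding digital_image_def by auto
  assume H: "\<not> (\<exists>f g. automorphism X A f \<and> g ` X \<subseteq> X \<and> g ` X \<noteq> X \<and> np_homotopic i X A X A f g)"
  show "np_irreducible i X A"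
    unfolding np_irreducible_def
  proof
    assume "\<exists>Y B. digital_image Y B \<and> card Y < card X \<and> np_htpy_equiv i X A Y B"
    then obtain Y B f g where Y: "digital_image Y B" "card Y < card X"
      and f: "dcont X A Y B f" and g: "dcont Y B X A g"
      and gf: "np_homotopic i X A X A (g \<circ> f) id"
      unfolding np_htpy_equiv_def by blast
    have finY: "finite Y" using Y(1) unfolding digital_image_def by auto
    have ii: "\<forall>x\<in>X. inv_into X id x = x" by (metis id_apply inj_on_id inv_into_f_f)
    have auto: "automorphism X A id"
      unfolding automorphism_def dcont_def using ii by auto
    have sub: "(g \<circ> f) ` X \<subseteq> g ` Y" using f unfolding dcont_def by auto
    have "card ((g \<circ> f) ` X) \<le> card Y"
      using card_mono[OF finite_imageI[OF finY] sub] card_image_le[OF finY, of g] by linarith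
    hence ne: "(g \<circ> f) ` X \<noteq> X" using Y(2) by auto
    have sX: "(g \<circ> f) ` X \<subseteq> X" using f g unfolding dcont_def image_subset_iff by auto
    show False using H auto ne sX htpy_sym[OF gf] by blast
  qed
qed

end
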